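(* Let $L$ be a finite lattice, let $b\in L$, and let $A\subseteq L$ be a nonempty subset such that $b\not\le a$ for every $a\in A$. If $\tilde A$ is a maximal $b$-meet antichain of $A$, then $\nabla_A^b\varphi=\nabla_{\tilde A}^b\varphi$ for every $\varphi\in R(L)$.
   Context: $L$ is a finite lattice with order $\le$, meet $\wedge$ and maximum $\hat1$; $R(L)$ is the space of real-valued functions on $L$. For $A'\subseteq L$, $\bigwedge A'$ is the meet of $A'$, with $\bigwedge\emptyset=\hat1$. For a finite $A\subseteq L$ and $b\in L$, $\nabla_A^b\varphi=\sum_{A'\subseteq A}(-1)^{|A'|}\varphi(\bigwedge A'\wedge b)$ (for nonempty $A=\{a_1,\dots,a_n\}$ this is $\nabla_{a_1,\ldots,a_n}\varphi(b)$ with $\nabla_a\varphi(x)=\varphi(x)-\varphi(x\wedge a)$ iterated). An $n$-element subset $\{a_1,\dots,a_n\}$ is a $b$-meet antichain if $\{a_1\wedge b,\dots,a_n\wedge b\}$ is an $n$-element antichain; a singleton $\{a\}$ is a $b$-meet antichain only when $b\not\le a$. A maximal $b$-meet antichain of $A$ is a subset $\tilde A\subseteq A$ such that (i) $\tilde A$ is a $b$-meet antichain and (ii) for every $a\in A$ there is $a'\in\tilde A$ with $a\wedge b\le a'\wedge b$. *)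

theory Defs
  imports Complex_Main
begin

definition meet_set :: "'a::{lattice, order_top} set \<Rightarrow> 'a" where
  "meet_set S = Finite_Set.fold inf top S"

definition nabla :: "'a::{finite, lattice, order_top} set \<Rightarrow> 'a \<Rightarrow> ('a \<Rightarrow> real) \<Rightarrow> real" where
  "nabla A b \<phi> = (\<Sum>A'\<in>Pow A. (-1) ^ card A' * \<phi> (inf (meet_set A') b))"

definition meet_antichain :: "'a::{finite, lattice, order_top} \<Rightarrow> 'a set \<Rightarrow> bool" where
  "meet_antichain b S \<longleftrightarrow>
     S \<noteq> {} \<and>
     (card S = 1 \<longrightarrow> (\<forall>a\<in>S. \<not> b \<le> a)) \<and>
     inj_on (\<lambda>a. inf a b) S \<and>
     (\<forall>x\<in>S. \<forall>y\<in>S. x \<noteq> y \<longrightarrow> \<not> inf x b \<le> inf y b)"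

definition max_meet_antichain :: "'a::{finite, lattice, order_top} \<Rightarrow> 'a set \<Rightarrow> 'a set \<Rightarrow> bool" where
  "max_meet_antichain b A At \<longleftrightarrow>
     At \<subseteq> A \<and> meet_antichain b At \<and>
     (\<forall>a\<in>A. \<exists>a'\<in>At. inf a b \<le> inf a' b)"

end

theory Submission
  imports Defs
begin

lemma meet_set_insert:
  fixes x :: "'a::{finite, lattice, order_top}"
  shows "meet_set (insert x S) = inf x (meet_set S)"
  unfolding meet_set_def
  by (rule comp_fun_idem_on.fold_insert_idem[OF comp_fun_idem_inf[unfolded comp_fun_idem_def']]) auto

lemma alt_sum_zero:
  fixes g :: "'a set \<Rightarrow> real"
  assumes fin: "finite A1" and na: "a' \<notin> A1"
    and eq: "\<And>B. B \<subseteq> A1 \<Longrightarrow> g (insert a' B) = g B"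
  shows "(\<Sum>B\<in>Pow (insert a' A1). (-1) ^ card B * g B) = 0"
proof -
  have inj: "inj_on (insert a') (Pow A1)"
    using na unfolding inj_on_def by (metis Pow_iff insert_ident subset_iff)
  have disj: "Pow A1 \<inter> insert a' ` Pow A1 = {}" using na by auto
  have "(\<Sum>B\<in>Pow (insert a' A1). (-1) ^ card B * g B)
      = (\<Sum>B\<in>Pow A1. (-1) ^ card B * g B) + (\<Sum>B\<in>insert a' ` Pow A1. (-1) ^ card B * g B)"
    unfolding Pow_insert using fin disj by (intro sum.union_disjoint) auto
  also have "(\<Sum>B\<in>insert a' ` Pow A1. (-1) ^ card B * g B)
       = (\<Sum>B\<in>Pow A1. (-1) ^ card (insert a' B) * g (insert a' B))"
    using inj by (simp add: sum.reindex)
  also have "\<dots> = (\<Sum>B\<in>Pow A1. - ((-1) ^ card B * g B))"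
  proof (rule sum.cong)
    fix B assume "B \<in> Pow A1"
    then have "B \<subseteq> A1" "finite B" "a' \<notin> B" using na fin finite_subset by auto
    then show "(-1) ^ card (insert a' B) * g (insert a' B) = - ((-1) ^ card B * g B)"
      using eq by simp
  qed simp
  finally show ?thesis by (simp add: sum_negf)
qed

lemma remove_one:
  fixes b a a' :: "'a::{finite, lattice, order_top}"
  assumes na: "a \<notin> A0" and a'A: "a' \<in> A0" and le: "inf a b \<le> inf a' b"
  shows "nabla (insert a A0) b \<phi> = nabla A0 b \<phi>"
proof -
  have fin: "finite A0" by simp
  have inj: "inj_on (insert a) (Pow A0)"
    using na unfolding inj_on_def by (metis Pow_iff insert_ident subset_iff)
  have disj: "Pow A0 \<inter> insert a ` Pow A0 = {}" using na by auto
  define g where "g B = \<phi> (inf (inf a (meet_set B)) b)" for B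
  have "nabla (insert a A0) b \<phi>
      = nabla A0 b \<phi> + (\<Sum>B\<in>insert a ` Pow A0. (-1) ^ card B * \<phi> (inf (meet_set B) b))"
    unfolding nabla_def Pow_insert using fin disj by (intro sum.union_disjoint) auto
  also have "(\<Sum>B\<in>insert a ` Pow A0. (-1) ^ card B * \<phi> (inf (meet_set B) b))
       = (\<Sum>B\<in>Pow A0. (-1) ^ card (insert a B) * \<phi> (inf (meet_set (insert a B)) b))"
    using inj by (simp add: sum.reindex)
  also have "\<dots> = (\<Sum>B\<in>Pow A0. - ((-1) ^ card B * g B))"
  proof (rule sum.cong)
    fix B assume "B \<in> Pow A0"
    then have "finite B" "a \<notin> B" using na fin finite_subset by auto
    then show "(-1) ^ card (insert a B) * \<phi> (inf (meet_set (insert a B)) b) = - ((-1) ^ card B * g B)"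
      by (simp add: g_def meet_set_insert)
  qed simp
  also have "(\<Sum>B\<in>Pow A0. - ((-1) ^ card B * g B)) = - (\<Sum>B\<in>Pow A0. (-1) ^ card B * g B)"
    by (simp add: sum_negf)
  also have "(\<Sum>B\<in>Pow A0. (-1) ^ card B * g B) = 0"
  proof -
    have A0eq: "A0 = insert a' (A0 - {a'})" using a'A by auto
    have "(\<Sum>B\<in>Pow (insert a' (A0 - {a'})). (-1) ^ card B * g B) = 0"
    proof (rule alt_sum_zero)
      fix B
      have "inf (inf a (inf a' (meet_set B))) b = inf (inf a (meet_set B)) b"
      proof -
        have "inf a b \<le> a'" using le by (meson inf.boundedE)
        then have "inf (inf a b) a' = inf a b" by (rule inf.absorb1)
        then show ?thesis by (metis inf.assoc inf.commute inf.left_commute)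
      qed
      then show "g (insert a' B) = g B" by (simp add: g_def meet_set_insert)
    qed auto
    then show ?thesis using A0eq by simp
  qed
  finally show ?thesis by simp
qed

lemma reduce:
  fixes b :: "'a::{finite, lattice, order_top}"
  shows "At \<subseteq> A \<Longrightarrow> (\<forall>a\<in>A. \<exists>a'\<in>At. inf a b \<le> inf a' b) \<Longrightarrow> nabla A b \<phi> = nabla At b \<phi>"
proof (induction "card (A - At)" arbitrary: A)
  case 0
  then have "A = At" by auto
  then show ?case by simp
next
  case (Suc n)
  then obtain a where a: "a \<in> A" "a \<notin> At" by (metis Diff_iff card_0_eq finite ex_in_conv nat.distinct(1))
  define A0 where "A0 = A - {a}"
  have A: "A = insert a A0" "a \<notin> A0" using a A0_def by auto
  from Suc.prems a obtain a' where a': "a' \<in> At" "inf a b \<le> inf a' b" by blast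
  have "a' \<in> A0" using a' Suc.prems a A0_def by auto
  have "nabla A b \<phi> = nabla A0 b \<phi>" using remove_one[OF A(2) \<open>a' \<in> A0\<close> a'(2)] A(1) by simp
  also have "\<dots> = nabla At b \<phi>"
  proof (rule Suc.hyps)
    have "A0 - At = (A - At) - {a}" using A0_def by auto
    then show "n = card (A0 - At)" using Suc.hyps(2) a by simp
    show "At \<subseteq> A0" using Suc.prems a A0_def by auto
    show "\<forall>x\<in>A0. \<exists>a'\<in>At. inf x b \<le> inf a' b" using Suc.prems A0_def by auto
  qed
  finally show ?case .
qed

theorem lemma2p3:
  fixes b :: "'a::{finite, lattice, order_top}"
    and A At :: "'a set"
  assumes "A \<noteq> {}"
    and "\<forall>a\<in>A. \<not> b \<le> a"
    and "max_meet_antichain b A At"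
  shows "\<forall>\<phi> :: 'a \<Rightarrow> real. nabla A b \<phi> = nabla At b \<phi>"
  using assms(3) reduce unfolding max_meet_antichain_def by blast

end
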